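(* Let $b_1$ be a positive integer with $b_1<n^*$. If $(\sigma^1,\sigma^2)$ is a Nash equilibrium of $\Gamma(b_1,1)$, then for every positive integer $b_2<m^*$ there exists $\hat\sigma^2\in\Delta(\mathcal A_2)$ (with $\mathcal A_2$ for budget $b_2$) such that $(\sigma^1,\hat\sigma^2)$ is a Nash equilibrium of $\Gamma(b_1,b_2)$; that is, equilibrium inspection strategies of $\Gamma(b_1,1)$ are equilibrium inspection strategies of every $\Gamma(b_1,b_2)$ with $b_2<m^*$.
   Context: Detection model: finite nonempty sets $\mathcal V$, $\mathcal E$, monitoring sets $\mathcal C_i\subseteq\mathcal E$ ($i\in\mathcal V$) with every $e\in\mathcal E$ in some $\mathcal C_i$; $\mathcal C_S=\bigcup_{i\in S}\mathcal C_i$; $F(S,T)=|\mathcal C_S\cap T|$. Set cover: $S\subseteq\mathcal V$ with $\mathcal C_S=\mathcal E$; $n^*$ = minimum size of a set cover. Set packing: $T\subseteq\mathcal E$ with $|\mathcal C_i\cap T|\le1$ for all $i$; $m^*$ = maximum size of a set packing. Game $\Gamma(b_1,b_2)$ ($b_1,b_2$ positive integers): $\mathcal A_1=\{S\subseteq\mathcal V:|S|\le b_1\}$, $\mathcal A_2=\{T\subseteq\mathcal E:|T|\le b_2\}$; mixed strategies $\sigma^1\in\Delta(\mathcal A_1)$, $\sigma^2\in\Delta(\mathcal A_2)$ (independent); payoffs $U_1=\mathbb E[F(S,T)]$, $U_2=\mathbb E[|T|]-\mathbb E[F(S,T)]$; Nash equilibrium in mixed strategies as usual. Note that the inspector's strategy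 set $\Delta(\mathcal A_1)$ does not depend on $b_2$. *)

theory Defs
  imports "HOL-Probability.Probability"
begin

definition cov :: "('v \<Rightarrow> 'e set) \<Rightarrow> 'v set \<Rightarrow> 'e set" where
  "cov C S = (\<Union>i\<in>S. C i)"

definition detF :: "('v \<Rightarrow> 'e set) \<Rightarrow> 'v set \<Rightarrow> 'e set \<Rightarrow> nat" where
  "detF C S T = card (cov C S \<inter> T)"

definition detection_model :: "'v set \<Rightarrow> 'e set \<Rightarrow> ('v \<Rightarrow> 'e set) \<Rightarrow> bool" where
  "detection_model V E C \<longleftrightarrow> finite V \<and> finite E \<and> V \<noteq> {} \<and> E \<noteq> {}
     \<and> (\<forall>i\<in>V. C i \<subseteq> E) \<and> (\<forall>e\<in>E. \<exists>i\<in>V. e \<in> C i)"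

definition is_set_cover :: "'v set \<Rightarrow> 'e set \<Rightarrow> ('v \<Rightarrow> 'e set) \<Rightarrow> 'v set \<Rightarrow> bool" where
  "is_set_cover V E C S \<longleftrightarrow> S \<subseteq> V \<and> cov C S = E"

definition n_star :: "'v set \<Rightarrow> 'e set \<Rightarrow> ('v \<Rightarrow> 'e set) \<Rightarrow> nat" where
  "n_star V E C = Min (card ` {S. is_set_cover V E C S})"

definition is_set_packing :: "'v set \<Rightarrow> 'e set \<Rightarrow> ('v \<Rightarrow> 'e set) \<Rightarrow> 'e set \<Rightarrow> bool" where
  "is_set_packing V E C T \<longleftrightarrow> T \<subseteq> E \<and> (\<forall>i\<in>V. card (C i \<inter> T) \<le> 1)"

definition m_star :: "'v set \<Rightarrow> 'e set \<Rightarrow> ('v \<Rightarrow> 'e set) \<Rightarrow> nat" where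
  "m_star V E C = Max (card ` {T. is_set_packing V E C T})"

definition A1 :: "'v set \<Rightarrow> nat \<Rightarrow> 'v set set" where
  "A1 V b1 = {S. S \<subseteq> V \<and> card S \<le> b1}"

definition A2 :: "'e set \<Rightarrow> nat \<Rightarrow> 'e set set" where
  "A2 E b2 = {T. T \<subseteq> E \<and> card T \<le> b2}"

definition mixed :: "'a set \<Rightarrow> 'a pmf set" where
  "mixed A = {p. set_pmf p \<subseteq> A}"

definition U1 :: "('v \<Rightarrow> 'e set) \<Rightarrow> 'v set pmf \<Rightarrow> 'e set pmf \<Rightarrow> real" where
  "U1 C s1 s2 = measure_pmf.expectation (pair_pmf s1 s2) (\<lambda>(S, T). real (detF C S T))"

definition U2 :: "('v \<Rightarrow> 'e set) \<Rightarrow> 'v set pmf \<Rightarrow> 'e set pmf \<Rightarrow> real" where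
  "U2 C s1 s2 = measure_pmf.expectation s2 (\<lambda>T. real (card T))
              - measure_pmf.expectation (pair_pmf s1 s2) (\<lambda>(S, T). real (detF C S T))"

definition is_NE :: "'v set \<Rightarrow> 'e set \<Rightarrow> ('v \<Rightarrow> 'e set) \<Rightarrow> nat \<Rightarrow> nat
                     \<Rightarrow> 'v set pmf \<Rightarrow> 'e set pmf \<Rightarrow> bool" where
  "is_NE V E C b1 b2 s1 s2 \<longleftrightarrow>
     s1 \<in> mixed (A1 V b1) \<and> s2 \<in> mixed (A2 E b2)
     \<and> (\<forall>t1\<in>mixed (A1 V b1). U1 C t1 s2 \<le> U1 C s1 s2)
     \<and> (\<forall>t2\<in>mixed (A2 E b2). U2 C s1 t2 \<le> U2 C s1 s2)"

end

theory Submission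
  imports Defs
begin


definition ex :: "'a pmf \<Rightarrow> ('a \<Rightarrow> real) \<Rightarrow> real" where
  "ex p f = (\<Sum>a\<in>set_pmf p. pmf p a * f a)"

lemma ex_superset:
  assumes "finite A" "set_pmf p \<subseteq> A"
  shows "ex p f = (\<Sum>a\<in>A. pmf p a * f a)"
  unfolding ex_def
  by (rule sum.mono_neutral_left) (use assms in \<open>auto simp: set_pmf_iff\<close>)

lemma expectation_ex:
  assumes "finite (set_pmf p)"
  shows "measure_pmf.expectation p f = ex p f"
  unfolding ex_def
  by (subst integral_measure_pmf[OF assms]) auto

lemma ex_pair:
  assumes "finite (set_pmf t)" "finite (set_pmf p)"
  shows "ex (pair_pmf t p) (\<lambda>(S,T). f S T) = ex t (\<lambda>S. ex p (\<lambda>T. f S T))"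
proof -
  have "ex (pair_pmf t p) (\<lambda>(S,T). f S T) = (\<Sum>(x,y)\<in>set_pmf t \<times> set_pmf p. pmf t x * (pmf p y * f x y))"
    unfolding ex_def by (rule sum.cong) (auto simp: pmf_pair)
  also have "\<dots> = (\<Sum>x\<in>set_pmf t. \<Sum>y\<in>set_pmf p. pmf t x * (pmf p y * f x y))"
    by (rule sum.cartesian_product[symmetric])
  also have "\<dots> = ex t (\<lambda>S. ex p (\<lambda>T. f S T))"
    unfolding ex_def by (simp add: sum_distrib_left)
  finally show ?thesis .
qed

lemma ex_return[simp]: "ex (return_pmf a) f = f a"
  unfolding ex_def by simp

lemma ex_add: "ex p (\<lambda>a. f a + g a) = ex p f + ex p g"
  unfolding ex_def by (simp add: distrib_left sum.distrib)

lemma ex_cmult: "ex p (\<lambda>a. c * f a) = c * ex p f"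
  unfolding ex_def by (simp add: sum_distrib_left mult_ac)

lemma ex_sum: "ex p (\<lambda>a. \<Sum>e\<in>E. f e a) = (\<Sum>e\<in>E. ex p (f e))"
  unfolding ex_def by (simp add: sum_distrib_left sum.swap[of _ E])

lemma ex_const:
  assumes "finite (set_pmf p)"
  shows "ex p (\<lambda>_. c) = c"
proof -
  have "ex p (\<lambda>_. c) = (\<Sum>a\<in>set_pmf p. pmf p a) * c"
    unfolding ex_def by (simp add: sum_distrib_right)
  thus ?thesis using sum_pmf_eq_1[OF assms order_refl] by simp
qed

lemma ex_mono:
  assumes "\<And>a. a \<in> set_pmf p \<Longrightarrow> f a \<le> g a"
  shows "ex p f \<le> ex p g"
  unfolding ex_def by (rule sum_mono) (simp add: assms mult_left_mono)

lemma ex_le_const: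
  assumes "finite (set_pmf p)" "\<And>a. a \<in> set_pmf p \<Longrightarrow> f a \<le> c"
  shows "ex p f \<le> c"
proof -
  have "ex p f \<le> ex p (\<lambda>_. c)" by (rule ex_mono) (use assms in auto)
  thus ?thesis using ex_const[OF assms(1)] by simp
qed

lemma ex_eq_const:
  assumes "finite (set_pmf p)" "\<And>a. a \<in> set_pmf p \<Longrightarrow> f a \<le> c" "ex p f = c"
    and "a \<in> set_pmf p"
  shows "f a = c"
proof -
  have s1: "(\<Sum>x\<in>set_pmf p. pmf p x) = 1" using sum_pmf_eq_1[OF assms(1) order_refl] .
  have "(\<Sum>x\<in>set_pmf p. pmf p x * (c - f x)) = (\<Sum>x\<in>set_pmf p. c * pmf p x - pmf p x * f x)"
    by (rule sum.cong) (simp_all add: right_diff_distrib mult.commute)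
  also have "\<dots> = (\<Sum>x\<in>set_pmf p. c * pmf p x) - ex p f"
    unfolding ex_def by (rule sum_subtractf)
  also have "(\<Sum>x\<in>set_pmf p. c * pmf p x) = c * (\<Sum>x\<in>set_pmf p. pmf p x)"
    by (rule sum_distrib_left[symmetric])
  finally have "(\<Sum>x\<in>set_pmf p. pmf p x * (c - f x)) = c * (\<Sum>x\<in>set_pmf p. pmf p x) - ex p f" .
  hence "(\<Sum>x\<in>set_pmf p. pmf p x * (c - f x)) = 0" using s1 assms(3) by simp
  moreover have "\<forall>x\<in>set_pmf p. 0 \<le> pmf p x * (c - f x)" using assms(2) by simp
  ultimately have "\<forall>x\<in>set_pmf p. pmf p x * (c - f x) = 0" by (simp add: sum_nonneg_eq_0_iff[OF assms(1)])
  hence "pmf p a * (c - f a) = 0" using assms(4) by blast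
  moreover have "pmf p a \<noteq> 0" using assms(4) by (simp add: set_pmf_iff)
  ultimately show ?thesis by simp
qed

lemma ex_mix:
  assumes "0 \<le> r" "r \<le> 1" "finite (set_pmf p)" "finite (set_pmf q)"
  shows "finite (set_pmf (bind_pmf (bernoulli_pmf r) (\<lambda>c. if c then p else q)))"
    and "set_pmf (bind_pmf (bernoulli_pmf r) (\<lambda>c. if c then p else q)) \<subseteq> set_pmf p \<union> set_pmf q"
    and "ex (bind_pmf (bernoulli_pmf r) (\<lambda>c. if c then p else q)) f = r * ex p f + (1 - r) * ex q f"
proof -
  let ?m = "bind_pmf (bernoulli_pmf r) (\<lambda>c. if c then p else q)"
  show sub: "set_pmf ?m \<subseteq> set_pmf p \<union> set_pmf q" by (auto split: if_splits)
  show fin: "finite (set_pmf ?m)" using sub assms by (meson finite_UnI finite_subset)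
  have pm: "pmf ?m x = r * pmf p x + (1 - r) * pmf q x" for x
    using assms by (simp add: pmf_bind mult_ac)
  have "ex ?m f = (\<Sum>a\<in>set_pmf p \<union> set_pmf q. pmf ?m a * f a)"
    by (rule ex_superset) (use sub assms in auto)
  also have "\<dots> = r * (\<Sum>a\<in>set_pmf p \<union> set_pmf q. pmf p a * f a)
      + (1 - r) * (\<Sum>a\<in>set_pmf p \<union> set_pmf q. pmf q a * f a)"
  proof -
    have "(\<Sum>a\<in>set_pmf p \<union> set_pmf q. pmf ?m a * f a) = (\<Sum>a\<in>set_pmf p \<union> set_pmf q. r * (pmf p a * f a) + (1 - r) * (pmf q a * f a))"
      by (rule sum.cong) (auto simp: pm algebra_simps)
    thus ?thesis by (simp add: sum.distrib sum_distrib_left)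
  qed
  also have "\<dots> = r * ex p f + (1 - r) * ex q f"
  proof -
    have 1: "ex p f = (\<Sum>a\<in>set_pmf p \<union> set_pmf q. pmf p a * f a)"
      by (rule ex_superset) (use assms in auto)
    have 2: "ex q f = (\<Sum>a\<in>set_pmf p \<union> set_pmf q. pmf q a * f a)"
      by (rule ex_superset) (use assms in auto)
    show ?thesis unfolding 1 2 ..
  qed
  finally show "ex ?m f = r * ex p f + (1 - r) * ex q f" .
qed



lemma ex_cong:
  assumes "\<And>a. a \<in> set_pmf p \<Longrightarrow> f a = g a"
  shows "ex p f = ex p g"
  unfolding ex_def by (rule sum.cong) (simp_all add: assms)

definition rho :: "('v \<Rightarrow> 'e set) \<Rightarrow> 'v set pmf \<Rightarrow> 'e \<Rightarrow> real" where
  "rho C t e = ex t (\<lambda>S. if e \<in> cov C S then 1 else 0)"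

definition mg :: "'e set pmf \<Rightarrow> 'e \<Rightarrow> real" where
  "mg p e = ex p (\<lambda>T. if e \<in> T then 1 else 0)"

lemma sum_ind: "finite E \<Longrightarrow> (\<Sum>e\<in>E. if e \<in> X then 1 else (0::real)) = real (card (E \<inter> X))"
  using sum.inter_restrict[of E "\<lambda>_. 1::real" X] by simp

lemma card_as_sum:
  assumes "finite E" "T \<subseteq> E"
  shows "real (card (A \<inter> T)) = (\<Sum>e\<in>E. (if e \<in> A then 1 else 0) * (if e \<in> T then 1 else 0))"
proof -
  have "(\<Sum>e\<in>E. (if e \<in> A then 1 else 0) * (if e \<in> T then 1 else (0::real)))
      = (\<Sum>e\<in>E. if e \<in> A \<inter> T then 1 else 0)"
    by (rule sum.cong) auto
  also have "\<dots> = real (card (E \<inter> (A \<inter> T)))"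
    by (rule sum_ind[OF assms(1)])
  also have "E \<inter> (A \<inter> T) = A \<inter> T" using assms by auto
  finally show ?thesis by simp
qed

lemma card_as_sum2:
  assumes "finite E" "T \<subseteq> E"
  shows "real (card T) = (\<Sum>e\<in>E. (if e \<in> T then 1 else 0))"
proof -
  have "(\<Sum>e\<in>E. (if e \<in> T then 1 else (0::real))) = real (card (E \<inter> T))"
    by (rule sum_ind[OF assms(1)])
  also have "E \<inter> T = T" using assms by auto
  finally show ?thesis by simp
qed

lemma U1_formula:
  assumes "finite E" "finite (set_pmf t)" "finite (set_pmf p)" "\<And>T. T \<in> set_pmf p \<Longrightarrow> T \<subseteq> E"
  shows "U1 C t p = (\<Sum>e\<in>E. rho C t e * mg p e)"
proof -
  have fin: "finite (set_pmf (pair_pmf t p))" using assms by simp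
  have "U1 C t p = ex (pair_pmf t p) (\<lambda>(S, T). real (detF C S T))"
    unfolding U1_def by (rule expectation_ex[OF fin])
  also have "\<dots> = ex t (\<lambda>S. ex p (\<lambda>T. real (detF C S T)))"
    by (rule ex_pair[OF assms(2,3)])
  also have "\<dots> = ex t (\<lambda>S. \<Sum>e\<in>E. (if e \<in> cov C S then 1 else 0) * mg p e)"
  proof (rule ex_cong)
    fix S
    have "ex p (\<lambda>T. real (detF C S T)) = ex p (\<lambda>T. \<Sum>e\<in>E. (if e \<in> cov C S then 1 else 0) * (if e \<in> T then 1 else 0))"
      unfolding detF_def by (rule ex_cong) (rule card_as_sum[OF assms(1) assms(4)])
    also have "\<dots> = (\<Sum>e\<in>E. (if e \<in> cov C S then 1 else 0) * mg p e)"
      unfolding ex_sum mg_def ex_cmult ..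
    finally show "ex p (\<lambda>T. real (detF C S T)) = (\<Sum>e\<in>E. (if e \<in> cov C S then 1 else 0) * mg p e)" .
  qed
  also have "\<dots> = (\<Sum>e\<in>E. rho C t e * mg p e)"
  proof -
    have "ex t (\<lambda>S. \<Sum>e\<in>E. (if e \<in> cov C S then 1 else 0) * mg p e)
        = ex t (\<lambda>S. \<Sum>e\<in>E. mg p e * (if e \<in> cov C S then 1 else 0))"
      by (simp add: mult.commute)
    also have "\<dots> = (\<Sum>e\<in>E. mg p e * rho C t e)"
      unfolding ex_sum rho_def ex_cmult ..
    finally show ?thesis by (simp add: mult.commute)
  qed
  finally show ?thesis .
qed

lemma Ecard_formula:
  assumes "finite E" "\<And>T. T \<in> set_pmf p \<Longrightarrow> T \<subseteq> E"
  shows "ex p (\<lambda>T. real (card T)) = (\<Sum>e\<in>E. mg p e)"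
proof -
  have "ex p (\<lambda>T. real (card T)) = ex p (\<lambda>T. \<Sum>e\<in>E. (if e \<in> T then 1 else 0))"
    by (rule ex_cong) (rule card_as_sum2[OF assms(1) assms(2)])
  thus ?thesis unfolding ex_sum mg_def .
qed

lemma U2_formula:
  assumes "finite E" "finite (set_pmf t)" "finite (set_pmf p)" "\<And>T. T \<in> set_pmf p \<Longrightarrow> T \<subseteq> E"
  shows "U2 C t p = (\<Sum>e\<in>E. mg p e * (1 - rho C t e))"
proof -
  have "U2 C t p = ex p (\<lambda>T. real (card T)) - U1 C t p"
    unfolding U2_def U1_def[symmetric] using expectation_ex[OF assms(3)] by simp
  also have "\<dots> = (\<Sum>e\<in>E. mg p e) - (\<Sum>e\<in>E. rho C t e * mg p e)"
    using Ecard_formula[OF assms(1,4)] U1_formula[OF assms] by simp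
  also have "\<dots> = (\<Sum>e\<in>E. mg p e * (1 - rho C t e))"
    by (simp add: sum_subtractf[symmetric] algebra_simps)
  finally show ?thesis .
qed



lemma pipage_aux:
  fixes D :: "'e set" and k :: nat
  assumes finD: "finite D"
  shows "(\<forall>e\<in>D. 0 \<le> y e \<and> y e \<le> 1) \<Longrightarrow> (\<Sum>e\<in>D. y e) = real k \<Longrightarrow>
    \<exists>p. finite (set_pmf p) \<and> (\<forall>T\<in>set_pmf p. T \<subseteq> D \<and> card T = k) \<and> (\<forall>e\<in>D. mg p e = y e)"
proof (induction "card {e\<in>D. 0 < y e \<and> y e < 1}" arbitrary: y rule: less_induct)
  case less
  let ?F = "{e\<in>D. 0 < y e \<and> y e < 1}"
  have finF: "finite ?F" using finD by simp
  show ?case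
  proof (cases "?F = {}")
    case True
    let ?T = "{e\<in>D. y e = 1}"
    have y01: "\<forall>e\<in>D. y e = 0 \<or> y e = 1" using True less.prems(1) by force
    have "(\<Sum>e\<in>D. y e) = (\<Sum>e\<in>D. if e \<in> ?T then 1 else 0)"
      by (rule sum.cong) (use y01 in auto)
    also have "\<dots> = real (card (D \<inter> ?T))" by (rule sum_ind[OF finD])
    also have "D \<inter> ?T = ?T" by auto
    finally have cardT: "card ?T = k" using less.prems(2) by simp
    have X2: "\<forall>T\<in>set_pmf (return_pmf ?T). T \<subseteq> D \<and> card T = k" using cardT by auto
    have X3: "\<forall>e\<in>D. mg (return_pmf ?T) e = y e" unfolding mg_def using y01 by auto
    show ?thesis using X2 X3 by (intro exI[of _ "return_pmf ?T"]) simp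
  next
    case False
    then obtain a where a: "a \<in> ?F" by blast
    have "\<exists>b\<in>?F. b \<noteq> a"
    proof (rule ccontr)
      assume "\<not> (\<exists>b\<in>?F. b \<noteq> a)"
      hence y01: "\<forall>e\<in>D - {a}. y e = 0 \<or> y e = 1" using less.prems(1) by force
      let ?T = "{e\<in>D - {a}. y e = 1}"
      have "(\<Sum>e\<in>D - {a}. y e) = (\<Sum>e\<in>D - {a}. if e \<in> ?T then 1 else 0)"
        by (rule sum.cong) (use y01 in auto)
      also have "\<dots> = real (card ((D - {a}) \<inter> ?T))" by (rule sum_ind) (use finD in simp)
      finally have s1: "(\<Sum>e\<in>D - {a}. y e) = real (card ((D - {a}) \<inter> ?T))" .
      have "(\<Sum>e\<in>D. y e) = y a + (\<Sum>e\<in>D - {a}. y e)"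
        using a finD by (simp add: sum.remove)
      hence ya: "y a = real k - real (card ((D - {a}) \<inter> ?T))" using s1 less.prems(2) by simp
      define m where "m = card ((D - {a}) \<inter> ?T)"
      have "0 < y a" "y a < 1" using a by auto
      hence "real m < real k" "real k < real m + 1" using ya m_def by auto
      hence "m < k" "k < m + 1" by linarith+
      thus False by simp
    qed
    then obtain b where b: "b \<in> ?F" "b \<noteq> a" by blast
    define eps where "eps = min (1 - y a) (y b)"
    define del where "del = min (y a) (1 - y b)"
    have eps: "0 < eps" "eps \<le> 1 - y a" "eps \<le> y b" using a b unfolding eps_def by auto
    have del: "0 < del" "del \<le> y a" "del \<le> 1 - y b" using a b unfolding del_def by auto
    define d :: "'e \<Rightarrow> real" where "d = (\<lambda>e. (if e = a then 1 else 0) - (if e = b then 1 else 0))"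
    define y1 where "y1 = (\<lambda>e. y e + eps * d e)"
    define y2 where "y2 = (\<lambda>e. y e - del * d e)"
    have sd: "(\<Sum>e\<in>D. d e) = 0"
      unfolding d_def using a b finD by (simp add: sum_subtractf)
    have sum1: "(\<Sum>e\<in>D. y1 e) = real k"
      unfolding y1_def using less.prems(2) sd by (simp add: sum.distrib sum_distrib_left[symmetric])
    have sum2: "(\<Sum>e\<in>D. y2 e) = real k"
      unfolding y2_def using less.prems(2) sd by (simp add: sum_subtractf sum_distrib_left[symmetric])
    have b1: "\<forall>e\<in>D. 0 \<le> y1 e \<and> y1 e \<le> 1"
      using less.prems(1) eps b(2) unfolding y1_def d_def by auto
    have b2: "\<forall>e\<in>D. 0 \<le> y2 e \<and> y2 e \<le> 1"
      using less.prems(1) del b(2) unfolding y2_def d_def by auto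
    let ?F1 = "{e\<in>D. 0 < y1 e \<and> y1 e < 1}"
    let ?F2 = "{e\<in>D. 0 < y2 e \<and> y2 e < 1}"
    have sub1: "?F1 \<subseteq> ?F"
    proof
      fix e assume e: "e \<in> ?F1"
      show "e \<in> ?F"
      proof (cases "e = a \<or> e = b")
        case True thus ?thesis using a b e by auto
      next
        case False thus ?thesis using e unfolding y1_def d_def by auto
      qed
    qed
    have sub2: "?F2 \<subseteq> ?F"
    proof
      fix e assume e: "e \<in> ?F2"
      show "e \<in> ?F"
      proof (cases "e = a \<or> e = b")
        case True thus ?thesis using a b e by auto
      next
        case False thus ?thesis using e unfolding y2_def d_def by auto
      qed
    qed
    have ne1: "a \<notin> ?F1 \<or> b \<notin> ?F1"
    proof (cases "eps = 1 - y a")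
      case True
      hence "y1 a = 1" unfolding y1_def d_def using b(2) by simp
      thus ?thesis by auto
    next
      case False
      hence "eps = y b" unfolding eps_def by auto
      hence "y1 b = 0" unfolding y1_def d_def using b(2) by simp
      thus ?thesis by auto
    qed
    have ne2: "a \<notin> ?F2 \<or> b \<notin> ?F2"
    proof (cases "del = y a")
      case True
      hence "y2 a = 0" unfolding y2_def d_def using b(2) by simp
      thus ?thesis by auto
    next
      case False
      hence "del = 1 - y b" unfolding del_def by auto
      hence "y2 b = 1" unfolding y2_def d_def using b(2) by simp
      thus ?thesis by auto
    qed
    have "card ?F1 < card ?F"
      by (rule psubset_card_mono[OF finF]) (use sub1 ne1 a b in blast)
    then obtain p1 where p1: "finite (set_pmf p1)" "\<forall>T\<in>set_pmf p1. T \<subseteq> D \<and> card T = k"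
        "\<forall>e\<in>D. mg p1 e = y1 e"
      using less.hyps[of y1] b1 sum1 by blast
    have "card ?F2 < card ?F"
      by (rule psubset_card_mono[OF finF]) (use sub2 ne2 a b in blast)
    then obtain p2 where p2: "finite (set_pmf p2)" "\<forall>T\<in>set_pmf p2. T \<subseteq> D \<and> card T = k"
        "\<forall>e\<in>D. mg p2 e = y2 e"
      using less.hyps[of y2] b2 sum2 by blast
    define r where "r = del / (eps + del)"
    have r: "0 \<le> r" "r \<le> 1" unfolding r_def using eps del by auto
    let ?p = "bind_pmf (bernoulli_pmf r) (\<lambda>c. if c then p1 else p2)"
    note mix = ex_mix[OF r p1(1) p2(1)]
    have X2: "\<forall>T\<in>set_pmf ?p. T \<subseteq> D \<and> card T = k"
    proof
      fix T assume "T \<in> set_pmf ?p"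
      hence "T \<in> set_pmf p1 \<union> set_pmf p2" using mix(2) by blast
      thus "T \<subseteq> D \<and> card T = k" using p1(2) p2(2) by blast
    qed
    have X3: "\<forall>e\<in>D. mg ?p e = y e"
    proof
      fix e assume e: "e \<in> D"
      have "mg ?p e = r * mg p1 e + (1 - r) * mg p2 e" unfolding mg_def by (rule mix(3))
      also have "\<dots> = r * y1 e + (1 - r) * y2 e" using p1(3) p2(3) e by simp
      also have "\<dots> = y e + d e * (r * eps - (1 - r) * del)"
        unfolding y1_def y2_def by (simp add: algebra_simps)
      also have "r * eps - (1 - r) * del = 0"
        unfolding r_def using eps del by (simp add: field_simps)
      finally show "mg ?p e = y e" by simp
    qed
    show ?thesis using mix(1) X2 X3 by blast
  qed
qed

lemma pipage:
  fixes D :: "'e set" and k :: nat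
  assumes "finite D" "\<forall>e\<in>D. 0 \<le> y e \<and> y e \<le> 1" "(\<Sum>e\<in>D. y e) = real k"
  shows "\<exists>p. finite (set_pmf p) \<and> (\<forall>T\<in>set_pmf p. T \<subseteq> D \<and> card T = k) \<and> (\<forall>e\<in>D. mg p e = y e)"
  using pipage_aux[OF assms(1)] assms(2,3) by blast



lemma cov_mono: "A \<subseteq> B \<Longrightarrow> cov C A \<subseteq> cov C B"
  unfolding cov_def by auto

lemma cov_sub: "S \<subseteq> V \<Longrightarrow> \<forall>i\<in>V. C i \<subseteq> E \<Longrightarrow> cov C S \<subseteq> E"
  unfolding cov_def by auto

lemma exchange:
  fixes x :: "'e \<Rightarrow> real"
  assumes finV: "finite V" and finE: "finite E" and CE: "\<forall>i\<in>V. C i \<subseteq> E"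
    and xnn: "\<forall>e\<in>E. 0 \<le> x e"
    and gle: "\<And>S. S \<subseteq> V \<Longrightarrow> card S \<le> b1 \<Longrightarrow> sum x (E \<inter> cov C S) \<le> v"
    and S': "S' \<subseteq> V" "card S' \<le> b1" "sum x (E \<inter> cov C S') = v"
    and e: "e \<in> E" "e \<notin> cov C S'" and i: "i \<in> V" "e \<in> C i" and b1: "0 < b1"
  shows "x e * b1 \<le> v"
proof -
  have finS': "finite S'" using S'(1) finV finite_subset by blast
  have vnn: "0 \<le> v" using S'(3) xnn by (metis IntE sum_nonneg)
  have eS'': "e \<in> cov C (insert i A)" for A using i unfolding cov_def by auto
  show ?thesis
  proof (cases "card S' < b1")
    case True
    let ?S = "insert i S'"
    have "card ?S \<le> b1" using True finS' by (simp add: card_insert_if)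
    hence le: "sum x (E \<inter> cov C ?S) \<le> v" using gle S'(1) i(1) by simp
    have sub: "insert e (E \<inter> cov C S') \<subseteq> E \<inter> cov C ?S"
      using e eS''[of S'] cov_mono[of S' ?S C] by auto
    have "sum x (insert e (E \<inter> cov C S')) \<le> sum x (E \<inter> cov C ?S)"
      by (rule sum_mono2) (use finE sub xnn in auto)
    moreover have "sum x (insert e (E \<inter> cov C S')) = x e + v"
      using e S'(3) finE by simp
    ultimately have "x e \<le> 0" using le by simp
    hence "x e * real b1 \<le> 0" by (rule mult_nonpos_nonneg) simp
    thus ?thesis using vnn by linarith
  next
    case False
    hence cS': "card S' = b1" using S'(2) by simp
    define D where "D j = {e'\<in>E. e' \<in> C j \<and> e' \<notin> cov C (S' - {j})}" for j
    have Dsub: "D j \<subseteq> E \<inter> cov C S'" if "j \<in> S'" for j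
      using that unfolding D_def cov_def by auto
    have disj: "D j \<inter> D k = {}" if "j \<in> S'" "k \<in> S'" "j \<noteq> k" for j k
      using that unfolding D_def cov_def by auto
    have finD: "finite (D j)" for j unfolding D_def using finE by simp
    have "(\<Sum>j\<in>S'. sum x (D j)) = sum x (\<Union>j\<in>S'. D j)"
      by (rule sum.UNION_disjoint[symmetric]) (use finS' finD disj in auto)
    also have "\<dots> \<le> sum x (E \<inter> cov C S')"
      by (rule sum_mono2) (use finE Dsub xnn in auto)
    finally have sumD: "(\<Sum>j\<in>S'. sum x (D j)) \<le> v" using S'(3) by simp
    have "\<exists>j\<in>S'. sum x (D j) * b1 \<le> v"
    proof (rule ccontr)
      assume "\<not> ?thesis"
      hence lt: "\<forall>j\<in>S'. v < sum x (D j) * b1" by auto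
      have ne: "S' \<noteq> {}" using cS' b1 by auto
      have "(\<Sum>j\<in>S'. v) < (\<Sum>j\<in>S'. sum x (D j) * b1)"
        by (rule sum_strict_mono) (use finS' ne lt in auto)
      hence "real b1 * v < (\<Sum>j\<in>S'. sum x (D j)) * b1"
        using cS' by (simp add: sum_distrib_right)
      moreover have "(\<Sum>j\<in>S'. sum x (D j)) * b1 \<le> v * b1"
        using sumD by (simp add: mult_right_mono)
      ultimately show False by (simp add: mult.commute)
    qed
    then obtain j where j: "j \<in> S'" "sum x (D j) * b1 \<le> v" by blast
    let ?S = "insert i (S' - {j})"
    have "card ?S \<le> card (S' - {j}) + 1" using finS' by (simp add: card_insert_if)
    also have "card (S' - {j}) = b1 - 1" using j(1) cS' finS' by simp
    finally have "card ?S \<le> b1" using b1 by simp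
    moreover have "?S \<subseteq> V" using S'(1) i(1) by auto
    ultimately have le: "sum x (E \<inter> cov C ?S) \<le> v" using gle by blast
    have rest: "(E \<inter> cov C S') - D j \<subseteq> cov C (S' - {j})"
    proof
      fix e' assume e': "e' \<in> (E \<inter> cov C S') - D j"
      then obtain k where k: "k \<in> S'" "e' \<in> C k" unfolding cov_def by auto
      show "e' \<in> cov C (S' - {j})"
      proof (cases "k = j")
        case True thus ?thesis using e' k unfolding D_def by auto
      next
        case False thus ?thesis using k unfolding cov_def by auto
      qed
    qed
    have sub: "insert e ((E \<inter> cov C S') - D j) \<subseteq> E \<inter> cov C ?S"
      using e rest eS''[of "S' - {j}"] cov_mono[of "S' - {j}" ?S C] by auto
    have "sum x (insert e ((E \<inter> cov C S') - D j)) \<le> sum x (E \<inter> cov C ?S)"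
      by (rule sum_mono2) (use finE sub xnn in auto)
    moreover have "sum x (insert e ((E \<inter> cov C S') - D j)) = x e + (v - sum x (D j))"
    proof -
      have "e \<notin> (E \<inter> cov C S') - D j" using e by auto
      hence "sum x (insert e ((E \<inter> cov C S') - D j)) = x e + sum x ((E \<inter> cov C S') - D j)"
        using finE by simp
      also have "sum x ((E \<inter> cov C S') - D j) = sum x (E \<inter> cov C S') - sum x (D j)"
        by (rule sum_diff) (use finE Dsub[OF j(1)] in auto)
      finally show ?thesis using S'(3) by simp
    qed
    ultimately have "x e \<le> sum x (D j)" using le by simp
    hence "x e * b1 \<le> sum x (D j) * b1" by (simp add: mult_right_mono)
    thus ?thesis using j(2) by simp
  qed
qed

lemma packing_bound:
  assumes "\<forall>i\<in>V. card (C i \<inter> P) \<le> 1" "S \<subseteq> V" "finite S"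
  shows "card (cov C S \<inter> P) \<le> card S"
proof -
  have "cov C S \<inter> P = (\<Union>i\<in>S. C i \<inter> P)" unfolding cov_def by auto
  hence "card (cov C S \<inter> P) \<le> (\<Sum>i\<in>S. card (C i \<inter> P))"
    using card_UN_le[OF assms(3), of "\<lambda>i. C i \<inter> P"] by simp
  also have "\<dots> \<le> (\<Sum>i\<in>S. 1)" by (rule sum_mono) (use assms in auto)
  finally show ?thesis by simp
qed



lemma ex_nonneg: "(\<And>a. a \<in> set_pmf p \<Longrightarrow> 0 \<le> f a) \<Longrightarrow> 0 \<le> ex p f"
  unfolding ex_def by (rule sum_nonneg) simp

lemma fin_A1: "finite V \<Longrightarrow> finite (A1 V b)"
  unfolding A1_def by (rule finite_subset[of _ "Pow V"]) auto

lemma fin_A2: "finite E \<Longrightarrow> finite (A2 E b)"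
  unfolding A2_def by (rule finite_subset[of _ "Pow E"]) auto

lemma rho_return: "rho C (return_pmf S) e = (if e \<in> cov C S then 1 else 0)"
  unfolding rho_def by simp

lemma mg_return: "mg (return_pmf T) e = (if e \<in> T then 1 else 0)"
  unfolding mg_def by simp

lemma ind_sum: "finite E \<Longrightarrow> (\<Sum>e\<in>E. (if e \<in> A then 1 else 0) * (x::_\<Rightarrow>real) e) = sum x (E \<inter> A)"
proof -
  assume f: "finite E"
  have "(\<Sum>e\<in>E. (if e \<in> A then 1 else 0) * x e) = (\<Sum>e\<in>E. if e \<in> A then x e else 0)"
    by (rule sum.cong) auto
  thus ?thesis using sum.inter_restrict[OF f, of x A] by simp
qed

theorem mainTheorem14:
  fixes V :: "'v set" and E :: "'e set" and C :: "'v \<Rightarrow> 'e set"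
    and b1 :: nat and s1 :: "'v set pmf" and s2 :: "'e set pmf"
  assumes "detection_model V E C"
    and "0 < b1" and "b1 < n_star V E C"
    and "is_NE V E C b1 1 s1 s2"
  shows "\<forall>b2::nat. 0 < b2 \<and> b2 < m_star V E C \<longrightarrow>
           (\<exists>s2'. s2' \<in> mixed (A2 E b2) \<and> is_NE V E C b1 b2 s1 s2')"
proof (intro allI impI)
  fix b2 :: nat assume b2: "0 < b2 \<and> b2 < m_star V E C"
  have finV: "finite V" and finE: "finite E" and CE: "\<forall>i\<in>V. C i \<subseteq> E"
    and cover: "\<forall>e\<in>E. \<exists>i\<in>V. e \<in> C i"
    using assms(1) unfolding detection_model_def by auto
  have s1A: "set_pmf s1 \<subseteq> A1 V b1" and s2A: "set_pmf s2 \<subseteq> A2 E 1"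
    and BR1: "\<forall>t1\<in>mixed (A1 V b1). U1 C t1 s2 \<le> U1 C s1 s2"
    and BR2: "\<forall>t2\<in>mixed (A2 E 1). U2 C s1 t2 \<le> U2 C s1 s2"
    using assms(4) unfolding is_NE_def mixed_def by auto
  have fin1: "finite (set_pmf s1)" using s1A fin_A1[OF finV] finite_subset by blast
  have fin2: "finite (set_pmf s2)" using s2A fin_A2[OF finE] finite_subset by blast
  have s2E: "\<And>T. T \<in> set_pmf s2 \<Longrightarrow> T \<subseteq> E" using s2A unfolding A2_def by auto
  define \<rho> where "\<rho> = rho C s1"
  define x where "x = mg s2"
  have rho01: "0 \<le> \<rho> e \<and> \<rho> e \<le> 1" for e
    unfolding \<rho>_def rho_def by (auto intro!: ex_nonneg ex_le_const fin1)
  have xnn: "0 \<le> x e" for e unfolding x_def mg_def by (auto intro!: ex_nonneg)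
  have sumx_le: "(\<Sum>e\<in>E. x e) \<le> 1"
  proof -
    have "(\<Sum>e\<in>E. x e) = ex s2 (\<lambda>T. real (card T))"
      unfolding x_def using Ecard_formula[OF finE s2E] by simp
    also have "\<dots> \<le> 1" by (rule ex_le_const[OF fin2]) (use s2A in \<open>auto simp: A2_def\<close>)
    finally show ?thesis .
  qed
  define u where "u = U2 C s1 s2"
  have u_eq: "u = (\<Sum>e\<in>E. x e * (1 - \<rho> e))"
    unfolding u_def x_def \<rho>_def by (rule U2_formula[OF finE fin1 fin2 s2E])
  have u_ge: "1 - \<rho> e \<le> u" if e: "e \<in> E" for e
  proof -
    have "return_pmf {e} \<in> mixed (A2 E 1)" using e unfolding mixed_def A2_def by auto
    hence "U2 C s1 (return_pmf {e}) \<le> u" using BR2 u_def by auto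
    moreover have "U2 C s1 (return_pmf {e}) = 1 - \<rho> e"
    proof -
      have "U2 C s1 (return_pmf {e}) = (\<Sum>e'\<in>E. mg (return_pmf {e}) e' * (1 - \<rho> e'))"
        unfolding \<rho>_def by (rule U2_formula[OF finE fin1]) (use e in auto)
      also have "\<dots> = (\<Sum>e'\<in>E. if e' = e then 1 - \<rho> e' else 0)"
        by (rule sum.cong) (auto simp: mg_return)
      also have "\<dots> = 1 - \<rho> e" using e finE by simp
      finally show ?thesis .
    qed
    ultimately show ?thesis by simp
  qed
  have "\<exists>e0\<in>E. \<rho> e0 < 1"
  proof (rule ccontr)
    assume "\<not> ?thesis"
    hence all1: "\<forall>e\<in>E. \<rho> e = 1" using rho01 by (meson not_less order_antisym)
    obtain S where S: "S \<in> set_pmf s1" using set_pmf_not_empty by fast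
    have "E \<subseteq> cov C S"
    proof
      fix e assume e: "e \<in> E"
      have "(if e \<in> cov C S then 1 else 0) = (1::real)"
        by (rule ex_eq_const[OF fin1 _ _ S]) (use all1 e in \<open>auto simp: \<rho>_def rho_def\<close>)
      thus "e \<in> cov C S" by (auto split: if_splits)
    qed
    moreover have SV: "S \<subseteq> V" "card S \<le> b1" using S s1A unfolding A1_def by auto
    ultimately have "is_set_cover V E C S" unfolding is_set_cover_def using cov_sub[OF _ CE] by blast
    moreover have "finite (card ` {S. is_set_cover V E C S})"
      by (rule finite_imageI, rule finite_subset[of _ "Pow V"]) (use finV in \<open>auto simp: is_set_cover_def\<close>)
    ultimately have "n_star V E C \<le> card S" unfolding n_star_def by (simp add: Min_le)
    thus False using SV assms(3) by simp
  qed
  then obtain e0 where e0: "e0 \<in> E" "\<rho> e0 < 1" by blast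
  have upos: "0 < u" using u_ge[OF e0(1)] e0(2) by simp
  have sumx1: "(\<Sum>e\<in>E. x e) = 1" and slack: "\<forall>e\<in>E. x e * (u - (1 - \<rho> e)) = 0"
  proof -
    have t_nn: "\<forall>e\<in>E. 0 \<le> x e * (u - (1 - \<rho> e))" using u_ge xnn by simp
    have "(\<Sum>e\<in>E. x e * u) - (\<Sum>e\<in>E. x e * (u - (1 - \<rho> e))) = (\<Sum>e\<in>E. x e * u - x e * (u - (1 - \<rho> e)))"
      by (rule sum_subtractf[symmetric])
    also have "\<dots> = (\<Sum>e\<in>E. x e * (1 - \<rho> e))"
      by (rule sum.cong) (simp_all add: right_diff_distrib)
    finally have "u = (\<Sum>e\<in>E. x e * u) - (\<Sum>e\<in>E. x e * (u - (1 - \<rho> e)))"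
      using u_eq by simp
    also have "(\<Sum>e\<in>E. x e * u) = (\<Sum>e\<in>E. x e) * u" by (simp add: sum_distrib_right)
    finally have eq: "u = (\<Sum>e\<in>E. x e) * u - (\<Sum>e\<in>E. x e * (u - (1 - \<rho> e)))" .
    have nn: "0 \<le> (\<Sum>e\<in>E. x e * (u - (1 - \<rho> e)))" using t_nn by (simp add: sum_nonneg)
    have "(\<Sum>e\<in>E. x e) * u \<le> 1 * u" using sumx_le upos by (simp add: mult_right_mono)
    hence A: "(\<Sum>e\<in>E. x e * (u - (1 - \<rho> e))) = 0" and B: "(\<Sum>e\<in>E. x e) * u = u"
      using eq nn by linarith+
    show "(\<Sum>e\<in>E. x e) = 1"
      using mult_cancel_right2[of "(\<Sum>e\<in>E. x e)" u] B upos by auto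
    show "\<forall>e\<in>E. x e * (u - (1 - \<rho> e)) = 0"
      using A t_nn by (simp add: sum_nonneg_eq_0_iff[OF finE])
  qed
  define v where "v = 1 - u"
  have rho_ge: "\<forall>e\<in>E. v \<le> \<rho> e" using u_ge unfolding v_def by force
  have rho_eq: "\<forall>e\<in>E. x e \<noteq> 0 \<longrightarrow> \<rho> e = v" using slack unfolding v_def by auto
  have vlt: "v < 1" using upos v_def by simp
  define G where "G S = sum x (E \<inter> cov C S)" for S
  have U1_s2: "U1 C t s2 = ex t G" if t: "finite (set_pmf t)" for t
  proof -
    have "U1 C t s2 = (\<Sum>e\<in>E. rho C t e * x e)"
      unfolding x_def by (rule U1_formula[OF finE t fin2 s2E])
    also have "\<dots> = (\<Sum>e\<in>E. ex t (\<lambda>S. x e * (if e \<in> cov C S then 1 else 0)))"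
      unfolding rho_def ex_cmult by (simp add: mult.commute)
    also have "\<dots> = ex t (\<lambda>S. \<Sum>e\<in>E. x e * (if e \<in> cov C S then 1 else 0))"
      by (rule ex_sum[symmetric])
    also have "\<dots> = ex t G"
      by (rule ex_cong) (simp add: G_def ind_sum[OF finE, symmetric] mult.commute)
    finally show ?thesis .
  qed
  have U1_val: "U1 C s1 s2 = v"
  proof -
    have "U1 C s1 s2 = (\<Sum>e\<in>E. \<rho> e * x e)"
      unfolding x_def \<rho>_def by (rule U1_formula[OF finE fin1 fin2 s2E])
    also have "\<dots> = (\<Sum>e\<in>E. v * x e)" by (rule sum.cong) (use rho_eq in auto)
    also have "\<dots> = v" using sumx1 by (simp add: sum_distrib_left[symmetric])
    finally show ?thesis .
  qed
  have Gle: "G S \<le> v" if "S \<subseteq> V" "card S \<le> b1" for S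
  proof -
    have "return_pmf S \<in> mixed (A1 V b1)" using that unfolding mixed_def A1_def by auto
    hence "U1 C (return_pmf S) s2 \<le> v" using BR1 U1_val by auto
    thus ?thesis using U1_s2[of "return_pmf S"] by simp
  qed
  have Geq: "G S = v" if S: "S \<in> set_pmf s1" for S
  proof (rule ex_eq_const[OF fin1 _ _ S])
    show "G a \<le> v" if "a \<in> set_pmf s1" for a using that s1A Gle unfolding A1_def by auto
    show "ex s1 G = v" using U1_s2[OF fin1] U1_val by simp
  qed
  have vnn: "0 \<le> v"
  proof -
    have "\<exists>e\<in>E. x e \<noteq> 0"
    proof (rule ccontr)
      assume "\<not> ?thesis" hence "(\<Sum>e\<in>E. x e) = 0" by simp
      thus False using sumx1 by simp
    qed
    thus ?thesis using rho_eq rho01 by force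
  qed
  have xb1: "x e * b1 \<le> v" if e: "e \<in> E" for e
  proof (cases "x e = 0")
    case True thus ?thesis using vnn by simp
  next
    case False
    hence re: "\<rho> e = v" using rho_eq e by auto
    have "\<exists>S\<in>set_pmf s1. e \<notin> cov C S"
    proof (rule ccontr)
      assume "\<not> ?thesis"
      hence "\<rho> e = ex s1 (\<lambda>_. 1)" unfolding \<rho>_def rho_def by (intro ex_cong) auto
      thus False using ex_const[OF fin1] re vlt by simp
    qed
    then obtain S where S: "S \<in> set_pmf s1" "e \<notin> cov C S" by blast
    obtain i where i: "i \<in> V" "e \<in> C i" using cover e by blast
    have SV: "S \<subseteq> V" "card S \<le> b1" using S(1) s1A unfolding A1_def by auto
    show ?thesis
      by (rule exchange[OF finV finE CE _ _ SV _ e S(2) i assms(2)])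
         (use xnn Gle Geq[OF S(1)] in \<open>auto simp: G_def\<close>)
  qed
  have vm: "v * m_star V E C \<le> b1"
  proof -
    have finP: "finite {T. is_set_packing V E C T}"
      by (rule finite_subset[of _ "Pow E"]) (use finE in \<open>auto simp: is_set_packing_def\<close>)
    have "{} \<in> {T. is_set_packing V E C T}" unfolding is_set_packing_def by simp
    hence "m_star V E C \<in> card ` {T. is_set_packing V E C T}"
      unfolding m_star_def by (intro Max_in) (use finP in auto)
    then obtain P where P: "is_set_packing V E C P" "card P = m_star V E C" by auto
    have PE: "P \<subseteq> E" and Pi: "\<forall>i\<in>V. card (C i \<inter> P) \<le> 1"
      using P(1) unfolding is_set_packing_def by auto
    have finP': "finite P" using PE finE finite_subset by blast
    have "(\<Sum>e\<in>P. v) \<le> (\<Sum>e\<in>P. \<rho> e)" by (rule sum_mono) (use rho_ge PE in auto)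
    also have "(\<Sum>e\<in>P. \<rho> e) = ex s1 (\<lambda>S. \<Sum>e\<in>P. if e \<in> cov C S then 1 else 0)"
      unfolding \<rho>_def rho_def by (rule ex_sum[symmetric])
    also have "\<dots> = ex s1 (\<lambda>S. real (card (P \<inter> cov C S)))"
      by (rule ex_cong) (rule sum_ind[OF finP'])
    also have "\<dots> \<le> b1"
    proof (rule ex_le_const[OF fin1])
      fix S assume "S \<in> set_pmf s1"
      hence SV: "S \<subseteq> V" "card S \<le> b1" using s1A unfolding A1_def by auto
      have "finite S" using SV finV finite_subset by blast
      hence "card (cov C S \<inter> P) \<le> card S" using packing_bound[OF Pi SV(1)] by blast
      thus "real (card (P \<inter> cov C S)) \<le> real b1" using SV by (simp add: Int_commute)
    qed
    finally show ?thesis using P(2) by (simp add: mult.commute)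
  qed
  have yle: "real b2 * x e \<le> 1" if e: "e \<in> E" for e
  proof -
    have "x e * b1 * m_star V E C \<le> v * m_star V E C"
      using xb1[OF e] by (simp add: mult_right_mono)
    also have "\<dots> \<le> b1" by (rule vm)
    finally have "(x e * m_star V E C) * b1 \<le> 1 * b1" by (simp add: mult_ac)
    hence "x e * m_star V E C \<le> 1" using assms(2) by (simp add: mult_le_cancel_right)
    moreover have "x e * b2 \<le> x e * m_star V E C"
      using b2 xnn[of e] by (simp add: mult_left_mono)
    ultimately show ?thesis by (simp add: mult.commute)
  qed
  obtain p where p: "finite (set_pmf p)" "\<forall>T\<in>set_pmf p. T \<subseteq> E \<and> card T = b2"
    "\<forall>e\<in>E. mg p e = real b2 * x e"
  proof -
    have "\<exists>p. finite (set_pmf p) \<and> (\<forall>T\<in>set_pmf p. T \<subseteq> E \<and> card T = b2) \<and> (\<forall>e\<in>E. mg p e = real b2 * x e)"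
      by (rule pipage[OF finE]) (use yle xnn sumx1 in \<open>auto simp: sum_distrib_left[symmetric]\<close>)
    thus ?thesis using that by blast
  qed
  have pE: "\<And>T. T \<in> set_pmf p \<Longrightarrow> T \<subseteq> E" using p(2) by auto
  have pmix: "p \<in> mixed (A2 E b2)" using p(2) unfolding mixed_def A2_def by auto
  have NE: "is_NE V E C b1 b2 s1 p"
    unfolding is_NE_def
  proof (intro conjI ballI)
    show "s1 \<in> mixed (A1 V b1)" using s1A unfolding mixed_def by simp
    show "p \<in> mixed (A2 E b2)" by (rule pmix)
  next
    fix t1 assume t1: "t1 \<in> mixed (A1 V b1)"
    have ft: "finite (set_pmf t1)" using t1 fin_A1[OF finV] finite_subset unfolding mixed_def by blast
    have sc: "U1 C t p = real b2 * U1 C t s2" if "finite (set_pmf t)" for t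
    proof -
      have "U1 C t p = (\<Sum>e\<in>E. rho C t e * mg p e)" by (rule U1_formula[OF finE that p(1) pE])
      also have "\<dots> = (\<Sum>e\<in>E. real b2 * (rho C t e * x e))"
        by (rule sum.cong) (use p(3) in \<open>auto simp: mult_ac\<close>)
      also have "\<dots> = real b2 * (\<Sum>e\<in>E. rho C t e * x e)"
        by (simp add: sum_distrib_left)
      also have "\<dots> = real b2 * U1 C t s2"
        using U1_formula[OF finE that fin2 s2E] unfolding x_def by simp
      finally show ?thesis .
    qed
    have "U1 C t1 s2 \<le> U1 C s1 s2" using BR1 t1 by blast
    thus "U1 C t1 p \<le> U1 C s1 p" using sc[OF ft] sc[OF fin1] by (simp add: mult_left_mono)
  next
    fix t2 assume t2: "t2 \<in> mixed (A2 E b2)"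
    have ft: "finite (set_pmf t2)" using t2 fin_A2[OF finE] finite_subset unfolding mixed_def by blast
    have tE: "\<And>T. T \<in> set_pmf t2 \<Longrightarrow> T \<subseteq> E" using t2 unfolding mixed_def A2_def by auto
    have "U2 C s1 t2 = (\<Sum>e\<in>E. mg t2 e * (1 - \<rho> e))"
      unfolding \<rho>_def by (rule U2_formula[OF finE fin1 ft tE])
    also have "\<dots> \<le> (\<Sum>e\<in>E. mg t2 e * (1 - v))"
    proof (rule sum_mono)
      fix e assume e: "e \<in> E"
      have "0 \<le> mg t2 e" unfolding mg_def by (auto intro!: ex_nonneg)
      thus "mg t2 e * (1 - \<rho> e) \<le> mg t2 e * (1 - v)" using rho_ge e by (simp add: mult_left_mono)
    qed
    also have "\<dots> = (\<Sum>e\<in>E. mg t2 e) * (1 - v)" by (simp add: sum_distrib_right)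
    also have "(\<Sum>e\<in>E. mg t2 e) = ex t2 (\<lambda>T. real (card T))"
      using Ecard_formula[OF finE tE] by simp
    also have "ex t2 (\<lambda>T. real (card T)) * (1 - v) \<le> real b2 * (1 - v)"
    proof (rule mult_right_mono)
      show "ex t2 (\<lambda>T. real (card T)) \<le> real b2"
        by (rule ex_le_const[OF ft]) (use t2 in \<open>auto simp: mixed_def A2_def\<close>)
      show "0 \<le> 1 - v" using vlt by simp
    qed
    also have "real b2 * (1 - v) = U2 C s1 p"
    proof -
      have "U2 C s1 p = (\<Sum>e\<in>E. mg p e * (1 - \<rho> e))"
        unfolding \<rho>_def by (rule U2_formula[OF finE fin1 p(1) pE])
      also have "\<dots> = real b2 * (\<Sum>e\<in>E. x e * (1 - \<rho> e))"
        by (simp add: p(3) sum_distrib_left mult_ac)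
      also have "\<dots> = real b2 * (1 - v)" using u_eq v_def by simp
      finally show ?thesis by simp
    qed
    finally show "U2 C s1 t2 \<le> U2 C s1 p" .
  qed
  show "\<exists>s2'. s2' \<in> mixed (A2 E b2) \<and> is_NE V E C b1 b2 s1 s2'"
    using pmix NE by blast
qed


end
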